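(* Let $\mathbf{W}=\langle W;\to,\neg,{}^{+},{}^{-},1\rangle$ be a quasi-Wajsberg* algebra and $\tau$ the congruence on $\mathbf{W}$ defined by $\langle x,y\rangle\in\tau$ iff $x=y$ or $x,y\in R(W)$. Then the quotient $\mathbf{W}/\tau$ is a flat quasi-Wajsberg* algebra.
   Context: A quasi-Wajsberg* algebra is an algebra $\langle W;\to,\neg,{}^{+},{}^{-},1\rangle$ of type $\langle2,1,1,1,0\rangle$ such that for all $x,y,z\in W$: (QW*1) $x\to y=\neg y\to\neg x$; (QW*2) $(x\to 1)\to((y\to 1)\to z)=(y\to 1)\to((x\to 1)\to z)$; (QW*3) $(1\to x)\to 1=1$; (QW*4) $(z\to z)\to(x\to y)=x\to y$; (QW*5) $(1\to 1)\to x^{+}=((1\to 1)\to x)^{+}=(x\to 1)\to 1$ and $(1\to 1)\to x^{-}=((1\to 1)\to x)^{-}=(x\to\neg 1)\to\neg 1$; (QW*6) $x\to y=(y^{+}\to x^{-})\to(x^{+}\to y^{-})$; (QW*7) $\neg(x\to y)=y\to x$; (QW*8) $\neg\neg x=x$; (QW*9) $(x\to(\neg x\to y))^{+}=x^{+}\to(\neg x^{+}\to y^{+})$; (QW*10) $x\vee y=y\vee x$; (QW*11) $x\vee(y\vee z)=(x\vee y)\vee z$; (QW*12) $x\to(y\vee z)=(x\to y)\vee(x\to z)$; where $x\vee y:=((x^{+}\to y^{+})^{+}\to(\neg x)^{-})\to((y^{-}\to x^{-})^{-}\to x^{-})$. Conventions: ${}^+,{}^-$ bind tighter than $\neg$,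 which binds tighter than $\to$. Put $0:=1\to 1$ and $R(W):=\{x\in W:0\to x=x\}$. The quotient $\mathbf{W}/\tau$ has the induced operations $(x/\tau)\to(y/\tau)=(x\to y)/\tau$, $\neg(x/\tau)=(\neg x)/\tau$, $(x/\tau)^{+}=x^{+}/\tau$, $(x/\tau)^{-}=x^{-}/\tau$ and constant $1/\tau$. A quasi-Wajsberg* algebra is flat if it satisfies $0=1$, i.e. $1\to 1=1$. *)

theory Defs
  imports Main
begin

definition qw_join :: "('a \<Rightarrow> 'a \<Rightarrow> 'a) \<Rightarrow> ('a \<Rightarrow> 'a) \<Rightarrow> ('a \<Rightarrow> 'a) \<Rightarrow> ('a \<Rightarrow> 'a) \<Rightarrow> 'a \<Rightarrow> 'a \<Rightarrow> 'a" where
  "qw_join imp neg pl mi x y =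
     imp (imp (pl (imp (pl x) (pl y))) (mi (neg x))) (imp (mi (imp (mi y) (mi x))) (mi x))"

definition qw_star :: "'a set \<Rightarrow> ('a \<Rightarrow> 'a \<Rightarrow> 'a) \<Rightarrow> ('a \<Rightarrow> 'a) \<Rightarrow> ('a \<Rightarrow> 'a) \<Rightarrow> ('a \<Rightarrow> 'a) \<Rightarrow> 'a \<Rightarrow> bool" where
  "qw_star W imp neg pl mi one \<longleftrightarrow>
     one \<in> W \<and>
     (\<forall>x\<in>W. \<forall>y\<in>W. imp x y \<in> W) \<and>
     (\<forall>x\<in>W. neg x \<in> W \<and> pl x \<in> W \<and> mi x \<in> W) \<and>
     (\<forall>x\<in>W. \<forall>y\<in>W. imp x y = imp (neg y) (neg x)) \<and>
     (\<forall>x\<in>W. \<forall>y\<in>W. \<forall>z\<in>W.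
        imp (imp x one) (imp (imp y one) z) = imp (imp y one) (imp (imp x one) z)) \<and>
     (\<forall>x\<in>W. imp (imp one x) one = one) \<and>
     (\<forall>x\<in>W. \<forall>y\<in>W. \<forall>z\<in>W. imp (imp z z) (imp x y) = imp x y) \<and>
     (\<forall>x\<in>W. imp (imp one one) (pl x) = pl (imp (imp one one) x) \<and>
              pl (imp (imp one one) x) = imp (imp x one) one) \<and>
     (\<forall>x\<in>W. imp (imp one one) (mi x) = mi (imp (imp one one) x) \<and>
              mi (imp (imp one one) x) = imp (imp x (neg one)) (neg one)) \<and>
     (\<forall>x\<in>W. \<forall>y\<in>W. imp x y = imp (imp (pl y) (mi x)) (imp (pl x) (mi y))) \<and>
     (\<forall>x\<in>W. \<forall>y\<in>W. neg (imp x y) = imp y x) \<and>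
     (\<forall>x\<in>W. neg (neg x) = x) \<and>
     (\<forall>x\<in>W. \<forall>y\<in>W. pl (imp x (imp (neg x) y)) = imp (pl x) (imp (neg (pl x)) (pl y))) \<and>
     (\<forall>x\<in>W. \<forall>y\<in>W. qw_join imp neg pl mi x y = qw_join imp neg pl mi y x) \<and>
     (\<forall>x\<in>W. \<forall>y\<in>W. \<forall>z\<in>W.
        qw_join imp neg pl mi x (qw_join imp neg pl mi y z) =
        qw_join imp neg pl mi (qw_join imp neg pl mi x y) z) \<and>
     (\<forall>x\<in>W. \<forall>y\<in>W. \<forall>z\<in>W.
        imp x (qw_join imp neg pl mi y z) =
        qw_join imp neg pl mi (imp x y) (imp x z))"

text \<open>R(W) = {x \<in> W. 0 \<rightarrow> x = x} with 0 = 1 \<rightarrow> 1.\<close>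
definition qw_R :: "'a set \<Rightarrow> ('a \<Rightarrow> 'a \<Rightarrow> 'a) \<Rightarrow> 'a \<Rightarrow> 'a set" where
  "qw_R W imp one = {x \<in> W. imp (imp one one) x = x}"

definition qw_tau :: "'a set \<Rightarrow> ('a \<Rightarrow> 'a \<Rightarrow> 'a) \<Rightarrow> 'a \<Rightarrow> ('a \<times> 'a) set" where
  "qw_tau W imp one =
     {(x, y). x \<in> W \<and> y \<in> W \<and> (x = y \<or> (x \<in> qw_R W imp one \<and> y \<in> qw_R W imp one))}"

definition rep :: "'a set \<Rightarrow> 'a" where
  "rep X = (SOME x. x \<in> X)"

definition quot_op2 :: "('a \<times> 'a) set \<Rightarrow> ('a \<Rightarrow> 'a \<Rightarrow> 'a) \<Rightarrow> 'a set \<Rightarrow> 'a set \<Rightarrow> 'a set" where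
  "quot_op2 r f X Y = r `` {f (rep X) (rep Y)}"

definition quot_op1 :: "('a \<times> 'a) set \<Rightarrow> ('a \<Rightarrow> 'a) \<Rightarrow> 'a set \<Rightarrow> 'a set" where
  "quot_op1 r f X = r `` {f (rep X)}"

definition qw_flat :: "('a \<Rightarrow> 'a \<Rightarrow> 'a) \<Rightarrow> 'a \<Rightarrow> bool" where
  "qw_flat imp one \<longleftrightarrow> imp one one = one"

end

theory Submission
  imports Defs
begin

locale qws =
  fixes W :: "'a set" and imp :: "'a \<Rightarrow> 'a \<Rightarrow> 'a" and neg pl mi :: "'a \<Rightarrow> 'a" and one :: 'a
  assumes ax: "qw_star W imp neg pl mi one"
begin

abbreviation "R \<equiv> qw_R W imp one"
abbreviation "T \<equiv> qw_tau W imp one"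

lemma one_W: "one \<in> W" using ax unfolding qw_star_def by (elim conjE) blast
lemma imp_W: "x \<in> W \<Longrightarrow> y \<in> W \<Longrightarrow> imp x y \<in> W" using ax unfolding qw_star_def by (elim conjE) blast
lemma un_W: "x \<in> W \<Longrightarrow> neg x \<in> W \<and> pl x \<in> W \<and> mi x \<in> W" using ax unfolding qw_star_def by (elim conjE) blast

lemma R_sub: "R \<subseteq> W" unfolding qw_R_def by auto

lemma imp_R: assumes "x \<in> W" "y \<in> W" shows "imp x y \<in> R"
proof -
  have "imp (imp one one) (imp x y) = imp x y"
    using ax assms one_W unfolding qw_star_def by (elim conjE) blast
  thus ?thesis using imp_W[OF assms] unfolding qw_R_def by auto
qed

lemma one_R: "one \<in> R"
proof -
  have "imp (imp one one) one = one" using ax one_W unfolding qw_star_def by (elim conjE) blast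
  thus ?thesis using one_W unfolding qw_R_def by auto
qed

lemma neg_R: assumes "x \<in> R" shows "neg x \<in> R"
proof -
  have xW: "x \<in> W" and e: "imp (imp one one) x = x" using assms unfolding qw_R_def by auto
  have zW: "imp one one \<in> W" using imp_W one_W by blast
  have "neg (imp (imp one one) x) = imp x (imp one one)"
    using ax xW zW unfolding qw_star_def by (elim conjE) blast
  hence "neg x = imp x (imp one one)" using e by simp
  thus ?thesis using imp_R[OF xW zW] by simp
qed

lemma pl_R: assumes "x \<in> R" shows "pl x \<in> R"
proof -
  have xW: "x \<in> W" and e: "imp (imp one one) x = x" using assms unfolding qw_R_def by auto
  have "imp (imp one one) (pl x) = pl (imp (imp one one) x)"
    using ax xW unfolding qw_star_def by (elim conjE) blast
  thus ?thesis using e un_W[OF xW] unfolding qw_R_def by auto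
qed

lemma mi_R: assumes "x \<in> R" shows "mi x \<in> R"
proof -
  have xW: "x \<in> W" and e: "imp (imp one one) x = x" using assms unfolding qw_R_def by auto
  have "imp (imp one one) (mi x) = mi (imp (imp one one) x)"
    using ax xW unfolding qw_star_def by (elim conjE) blast
  thus ?thesis using e un_W[OF xW] unfolding qw_R_def by auto
qed

lemma negneg: "x \<in> W \<Longrightarrow> neg (neg x) = x" using ax unfolding qw_star_def by (elim conjE) blast

lemma neg_notR: assumes "x \<in> W" "x \<notin> R" shows "neg x \<notin> R"
  using neg_R negneg assms by metis

lemma cls: assumes "a \<in> W" shows "T `` {a} = (if a \<in> R then R else {a})"
  using assms R_sub unfolding qw_tau_def by auto

lemma quotE: assumes "X \<in> W // T" obtains a where "a \<in> W" "X = T `` {a}"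
  using assms unfolding quotient_def by blast

lemma rep_in: assumes "X \<in> W // T" shows "rep X \<in> X"
proof -
  obtain a where "a \<in> W" "X = T `` {a}" using quotE assms by blast
  hence "a \<in> X" using cls by auto
  thus ?thesis unfolding rep_def by (rule someI)
qed

lemma quot_sub: "X \<in> W // T \<Longrightarrow> X \<subseteq> W"
  by (metis quotE cls R_sub empty_subsetI insert_subset)

lemma rep_W: "X \<in> W // T \<Longrightarrow> rep X \<in> W"
  using rep_in quot_sub by blast

lemma cls_in: "a \<in> W \<Longrightarrow> T `` {a} \<in> W // T"
  unfolding quotient_def by blast

lemma R_in: "R \<in> W // T"
  using cls_in[OF one_W] cls[OF one_W] one_R by simp

lemma cls_one: "T `` {one} = R" using cls[OF one_W] one_R by simp

lemma Q2: "X \<in> W // T \<Longrightarrow> Y \<in> W // T \<Longrightarrow> quot_op2 T imp X Y = R"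
  unfolding quot_op2_def using cls imp_R rep_W imp_W by simp

lemma Q2_in: "X \<in> W // T \<Longrightarrow> Y \<in> W // T \<Longrightarrow> quot_op2 T imp X Y \<in> W // T"
  using Q2 R_in by simp

lemma Q1_in: "X \<in> W // T \<Longrightarrow> quot_op1 T neg X \<in> W // T \<and> quot_op1 T pl X \<in> W // T \<and> quot_op1 T mi X \<in> W // T"
  unfolding quot_op1_def using cls_in un_W rep_W by blast

lemma rep_R: "rep R \<in> R" using rep_in R_in by blast

lemma Q1R: "quot_op1 T neg R = R" "quot_op1 T pl R = R" "quot_op1 T mi R = R"
proof -
  have r: "rep R \<in> R" "rep R \<in> W" using rep_R R_sub by auto
  show "quot_op1 T neg R = R" unfolding quot_op1_def
    using cls[of "neg (rep R)"] neg_R[OF r(1)] R_sub by auto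
  show "quot_op1 T pl R = R" unfolding quot_op1_def
    using cls[of "pl (rep R)"] pl_R[OF r(1)] R_sub by auto
  show "quot_op1 T mi R = R" unfolding quot_op1_def
    using cls[of "mi (rep R)"] mi_R[OF r(1)] R_sub by auto
qed

lemma rep_single: "rep {a} = a" unfolding rep_def by simp

lemma Qnegneg: assumes "X \<in> W // T" shows "quot_op1 T neg (quot_op1 T neg X) = X"
proof -
  obtain a where a: "a \<in> W" "X = T `` {a}" using quotE assms by blast
  show ?thesis
  proof (cases "a \<in> R")
    case True
    then show ?thesis using a cls Q1R by simp
  next
    case False
    have X: "X = {a}" using a cls False by simp
    have na: "neg a \<in> W" "neg a \<notin> R" using un_W a neg_notR False by auto
    have "quot_op1 T neg X = {neg a}" unfolding X quot_op1_def rep_single using cls na by simp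
    hence "quot_op1 T neg (quot_op1 T neg X) = T `` {neg (neg a)}"
      by (simp add: quot_op1_def rep_single)
    also have "\<dots> = {a}" using cls[OF a(1)] negneg[OF a(1)] False by simp
    finally show ?thesis using X by simp
  qed
qed

lemma main: "qw_star (W // T) (quot_op2 T imp) (quot_op1 T neg) (quot_op1 T pl) (quot_op1 T mi)
            (T `` {one}) \<and> qw_flat (quot_op2 T imp) (T `` {one})"
  unfolding qw_star_def qw_flat_def qw_join_def cls_one
  by (simp add: Q2 Q2_in Q1_in Q1R R_in Qnegneg)

end

theorem proposition4p4:
  fixes W :: "'a set" and imp :: "'a \<Rightarrow> 'a \<Rightarrow> 'a" and neg pl mi :: "'a \<Rightarrow> 'a" and one :: 'a
  assumes "qw_star W imp neg pl mi one"
  defines "\<tau> \<equiv> qw_tau W imp one"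
  shows "qw_star (W // \<tau>) (quot_op2 \<tau> imp) (quot_op1 \<tau> neg) (quot_op1 \<tau> pl) (quot_op1 \<tau> mi)
            (\<tau> `` {one})
       \<and> qw_flat (quot_op2 \<tau> imp) (\<tau> `` {one})"
  unfolding \<tau>_def using qws.main[OF qws.intro[OF assms(1)]] .

end
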